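(* Let $G$ be a finitely generated group containing a finite index characteristic subgroup $H$, and let $\{s_i\}_{i=1}^{[G:H]}$ be representatives of the right cosets of $H$ (so $G=\bigcup_iHs_i$). Fix $\varphi\in\mathrm{Aut}(G)$ and $x\in G$, let $\bar\varphi$ be the automorphism of $H$ induced by $\varphi$, and let $f_{x,i}\in\mathrm{Aut}(H)$ be conjugation by $x_i=s_i\,x\,\varphi(s_i)^{-1}$. Then $$[x]_\varphi=\bigcup_{i=1}^{[G:H]}[1_H]_{f_{x,i}\circ\bar\varphi}\cdot x_i,$$ where $[1_H]_{f_{x,i}\circ\bar\varphi}=\{z\,(f_{x,i}(\bar\varphi(z)))^{-1}:z\in H\}$.
   Context: For $\psi\in\mathrm{Aut}(G)$, the $\psi$-twisted conjugacy class of $x$ is $[x]_\psi=\{z\,x\,\psi(z)^{-1}:z\in G\}$. *)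

theory Defs
  imports "HOL-Algebra.Algebra"
begin

definition twisted_class :: "('a, 'b) monoid_scheme \<Rightarrow> ('a \<Rightarrow> 'a) \<Rightarrow> 'a \<Rightarrow> 'a set" where
  "twisted_class G \<psi> x = {z \<otimes>\<^bsub>G\<^esub> x \<otimes>\<^bsub>G\<^esub> inv\<^bsub>G\<^esub> (\<psi> z) | z. z \<in> carrier G}"

definition finitely_generated_group :: "('a, 'b) monoid_scheme \<Rightarrow> bool" where
  "finitely_generated_group G \<longleftrightarrow>
     (\<exists>S. finite S \<and> S \<subseteq> carrier G \<and> generate G S = carrier G)"

definition characteristic_subgroup :: "'a set \<Rightarrow> ('a, 'b) monoid_scheme \<Rightarrow> bool" where
  "characteristic_subgroup H G \<longleftrightarrow>
     subgroup H G \<and> (\<forall>\<psi> \<in> iso G G. \<psi> ` H = H)"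

end

theory Submission
  imports Defs
begin

lemma (in group) conj_iso:
  assumes "g \<in> carrier G"
  shows "(\<lambda>z. g \<otimes> z \<otimes> inv g) \<in> iso G G"
proof -
  have hom: "(\<lambda>z. g \<otimes> z \<otimes> inv g) \<in> hom G G"
    using assms by (intro homI) (auto simp: m_assoc, simp add: m_assoc[symmetric])
  have inj: "inj_on (\<lambda>z. g \<otimes> z \<otimes> inv g) (carrier G)"
    using assms by (intro inj_onI) (simp add: m_assoc)
  have surj: "(\<lambda>z. g \<otimes> z \<otimes> inv g) ` carrier G = carrier G"
  proof
    show "(\<lambda>z. g \<otimes> z \<otimes> inv g) ` carrier G \<subseteq> carrier G" using assms by auto
    show "carrier G \<subseteq> (\<lambda>z. g \<otimes> z \<otimes> inv g) ` carrier G"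
    proof
      fix y assume y: "y \<in> carrier G"
      have "y = g \<otimes> (inv g \<otimes> y \<otimes> g) \<otimes> inv g" using y assms by (simp add: m_assoc[symmetric], simp add: m_assoc)
      thus "y \<in> (\<lambda>z. g \<otimes> z \<otimes> inv g) ` carrier G" using y assms by blast
    qed
  qed
  show ?thesis using hom inj surj by (simp add: iso_iff)
qed

lemma (in group) main_aux:
  fixes H :: "'a set"
    and s :: "nat \<Rightarrow> 'a" and \<phi> :: "'a \<Rightarrow> 'a" and x :: 'a
  assumes "group G"
    and "finitely_generated_group G"
    and "characteristic_subgroup H G"
    and "finite (rcosets\<^bsub>G\<^esub> H)"
    and "\<forall>i \<in> {1..card (rcosets\<^bsub>G\<^esub> H)}. s i \<in> carrier G"
    and "bij_betw (\<lambda>i. H #>\<^bsub>G\<^esub> s i) {1..card (rcosets\<^bsub>G\<^esub> H)} (rcosets\<^bsub>G\<^esub> H)"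
    and "\<phi> \<in> iso G G"
    and "x \<in> carrier G"
  shows "twisted_class G \<phi> x =
    (\<Union>i \<in> {1..card (rcosets\<^bsub>G\<^esub> H)}.
       (let xi = s i \<otimes>\<^bsub>G\<^esub> x \<otimes>\<^bsub>G\<^esub> inv\<^bsub>G\<^esub> (\<phi> (s i)) in
        twisted_class (G\<lparr>carrier := H\<rparr>) (\<lambda>z. xi \<otimes>\<^bsub>G\<^esub> \<phi> z \<otimes>\<^bsub>G\<^esub> inv\<^bsub>G\<^esub> xi) \<one>\<^bsub>G\<^esub>
          #>\<^bsub>G\<^esub> xi))"
proof -
  define I where "I = {1..card (rcosets H)}"
  have sub: "subgroup H G" and char: "\<And>\<psi>. \<psi> \<in> iso G G \<Longrightarrow> \<psi> ` H = H"
    using assms(3) unfolding characteristic_subgroup_def by auto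
  have Hc: "H \<subseteq> carrier G" using sub subgroup.subset by blast
  have phiH: "\<And>z. z \<in> H \<Longrightarrow> \<phi> z \<in> H" using char[OF assms(7)] by blast
  have phiC: "\<And>z. z \<in> carrier G \<Longrightarrow> \<phi> z \<in> carrier G"
    using assms(7) by (auto simp: iso_def hom_def)
  have phimult: "\<And>a b. a \<in> carrier G \<Longrightarrow> b \<in> carrier G \<Longrightarrow> \<phi> (a \<otimes> b) = \<phi> a \<otimes> \<phi> b"
    using assms(7) by (auto simp: iso_def hom_def)
  have conjH: "\<And>g z. g \<in> carrier G \<Longrightarrow> z \<in> H \<Longrightarrow> g \<otimes> z \<otimes> inv g \<in> H"
    using char[OF conj_iso] by blast
  have sC: "\<And>i. i \<in> I \<Longrightarrow> s i \<in> carrier G" using assms(5) I_def by auto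
  have piece: "\<And>i. i \<in> I \<Longrightarrow>
    (let xi = s i \<otimes> x \<otimes> inv (\<phi> (s i)) in
        twisted_class (G\<lparr>carrier := H\<rparr>) (\<lambda>z. xi \<otimes> \<phi> z \<otimes> inv xi) \<one> #> xi)
      = {g \<otimes> x \<otimes> inv (\<phi> g) | g. g \<in> H #> s i}"
  proof -
    fix i assume i: "i \<in> I"
    define xi where "xi = s i \<otimes> x \<otimes> inv (\<phi> (s i))"
    have xiC: "xi \<in> carrier G" unfolding xi_def using sC[OF i] assms(8) phiC by auto
    have eq: "\<And>z. z \<in> H \<Longrightarrow> z \<otimes>\<^bsub>G\<lparr>carrier := H\<rparr>\<^esub> \<one> \<otimes>\<^bsub>G\<lparr>carrier := H\<rparr>\<^esub>
          inv\<^bsub>G\<lparr>carrier := H\<rparr>\<^esub> (xi \<otimes> \<phi> z \<otimes> inv xi) \<otimes> xi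
        = (z \<otimes> s i) \<otimes> x \<otimes> inv (\<phi> (z \<otimes> s i))"
    proof -
      fix z assume z: "z \<in> H"
      have zC: "z \<in> carrier G" using z Hc by auto
      have inH: "xi \<otimes> \<phi> z \<otimes> inv xi \<in> H" using conjH[OF xiC phiH[OF z]] .
      have "z \<otimes>\<^bsub>G\<lparr>carrier := H\<rparr>\<^esub> \<one> \<otimes>\<^bsub>G\<lparr>carrier := H\<rparr>\<^esub>
          inv\<^bsub>G\<lparr>carrier := H\<rparr>\<^esub> (xi \<otimes> \<phi> z \<otimes> inv xi) \<otimes> xi
          = z \<otimes> inv (xi \<otimes> \<phi> z \<otimes> inv xi) \<otimes> xi"
        using m_inv_consistent[OF sub inH] zC by simp
      also have "\<dots> = z \<otimes> xi \<otimes> inv (\<phi> z)"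
        using zC xiC phiC[OF zC] by (simp add: inv_mult_group m_assoc)
      also have "\<dots> = (z \<otimes> s i) \<otimes> x \<otimes> inv (\<phi> (z \<otimes> s i))"
        using zC sC[OF i] assms(8) phiC[OF zC] phiC[OF sC[OF i]]
        by (simp add: xi_def phimult inv_mult_group m_assoc)
      finally show "?thesis z" .
    qed
    show "?thesis i"
      unfolding xi_def[symmetric] Let_def twisted_class_def r_coset_def
      using eq by auto
  qed
  have cover: "(\<Union>i\<in>I. H #> s i) = carrier G"
  proof -
    have "(\<lambda>i. H #> s i) ` I = rcosets H" using assms(6) I_def by (simp add: bij_betw_def)
    thus ?thesis using rcosets_part_G[OF sub] by simp
  qed
  show ?thesis
    unfolding I_def[symmetric]
    apply (subst SUP_cong[OF refl piece], assumption)
    unfolding twisted_class_def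
    using cover by blast
qed

theorem mainTheorem17:
  fixes G :: "('a, 'b) monoid_scheme" and H :: "'a set"
    and s :: "nat \<Rightarrow> 'a" and \<phi> :: "'a \<Rightarrow> 'a" and x :: 'a
  assumes "group G"
    and "finitely_generated_group G"
    and "characteristic_subgroup H G"
    and "finite (rcosets\<^bsub>G\<^esub> H)"
    and "\<forall>i \<in> {1..card (rcosets\<^bsub>G\<^esub> H)}. s i \<in> carrier G"
    and "bij_betw (\<lambda>i. H #>\<^bsub>G\<^esub> s i) {1..card (rcosets\<^bsub>G\<^esub> H)} (rcosets\<^bsub>G\<^esub> H)"
    and "\<phi> \<in> iso G G"
    and "x \<in> carrier G"
  shows "twisted_class G \<phi> x =
    (\<Union>i \<in> {1..card (rcosets\<^bsub>G\<^esub> H)}.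
       (let xi = s i \<otimes>\<^bsub>G\<^esub> x \<otimes>\<^bsub>G\<^esub> inv\<^bsub>G\<^esub> (\<phi> (s i)) in
        twisted_class (G\<lparr>carrier := H\<rparr>) (\<lambda>z. xi \<otimes>\<^bsub>G\<^esub> \<phi> z \<otimes>\<^bsub>G\<^esub> inv\<^bsub>G\<^esub> xi) \<one>\<^bsub>G\<^esub>
          #>\<^bsub>G\<^esub> xi))"
  using group.main_aux[OF assms(1) assms] .

end
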